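(* For any $n\ge 1$, the image $\rho(\mathsf{F}(n))$ coincides with the set $\mathsf{Tr}(n)$ of triwords of size $n$.
   Context: A Dyck path of size $m$ is encoded as a word of length $2m$ in $\{0,1\}$ ($1$ = north-east step, $0$ = south-east step) whose prefixes all contain at least as many $1$'s as $0$'s and which has $m$ letters of each kind. A Dyck path $d$ is primitive if whenever $d=xy$ with $x,y$ Dyck paths, $x$ or $y$ is empty. A factor $x$ of $d$ (i.e. $d=pxs$) is a subpath if $x$ is a Dyck path. A subpath $x$ of $d$ is movable if $x$ is primitive and $d=p\,1\,0^{m}\,x\,s$ with $m>0$ and either $s$ empty or $s$ starting with $1$. For such a decomposition and any $\alpha,\beta$ with $\alpha+\beta=m$, $\beta>0$, set $d_{\alpha,\beta}:=p\,1\,0^{\alpha}\,x\,0^{\beta}\,s$. The dexter covering relation on Dyck paths of size $m$ is: $d$ is covered by $d'$ iff $d'=d_{\alpha,\beta}$ for some movable subpath $x$ of $d$ and such $\alpha,\beta$; the dexter order is its reflexive–transitive closure. For $n\ge1$, $\mathsf{F}(n)$ is the interval of Dyck paths of size $n+2$ between $1100(10)^n$ and $1\,1^n\,0^n\,100$ for the dexter order. A valley is a factor $01$, and its height is the ordinate of the point between the $0$ and the $1$. The map $\rho$ on $\mathsf{F}(n)$: reading $d$ from left to right, keep a counter $N_2$ (initially $0$) and build a word $u$ (initially empty): (i) each time two consecutive letters $1$ are read in $d$, except the first two letters of $d$, add $1$ to $N_2$; (ii) each time a valley of height $h$ is read, append the word $h\,2^{N_2}$ to $u$ and reset $N_2$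 to $0$. Then $\rho(d)$ is the final $u$. A triword of size $n$ is a word $u=u_1\cdots u_n$ with $u_i\in\{0,1,2\}$, $u_1\ne 2$, and such that $u_i=0$ implies $u_j\neq 1$ for all $j>i$; $\mathsf{Tr}(n)$ denotes their set. *)

theory Defs
  imports Main
begin

text \<open>Dyck paths are words over {0,1} (as nat lists): 1 = north-east, 0 = south-east.\<close>

definition dyck :: "nat list \<Rightarrow> bool" where
  "dyck w \<longleftrightarrow> set w \<subseteq> {0,1} \<and> count_list w 1 = count_list w 0 \<and>
     (\<forall>k\<le>length w. count_list (take k w) 0 \<le> count_list (take k w) 1)"

definition primitive :: "nat list \<Rightarrow> bool" where
  "primitive d \<longleftrightarrow> dyck d \<and>
     (\<forall>x y. d = x @ y \<and> dyck x \<and> dyck y \<longrightarrow> x = [] \<or> y = [])"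

definition dexter_cover :: "nat list \<Rightarrow> nat list \<Rightarrow> bool" where
  "dexter_cover d d' \<longleftrightarrow> dyck d \<and>
     (\<exists>p x s m \<alpha> \<beta>. primitive x \<and> m > 0 \<and> (s = [] \<or> hd s = 1) \<and>
        d = p @ [1] @ replicate m 0 @ x @ s \<and> \<alpha> + \<beta> = m \<and> \<beta> > 0 \<and>
        d' = p @ [1] @ replicate \<alpha> 0 @ x @ replicate \<beta> 0 @ s)"

definition dexter_le :: "nat list \<Rightarrow> nat list \<Rightarrow> bool" where
  "dexter_le = dexter_cover\<^sup>*\<^sup>*"

definition F :: "nat \<Rightarrow> nat list set" where
  "F n = {d. dyck d \<and> length d = 2 * (n + 2) \<and>
     dexter_le ([1,1,0,0] @ concat (replicate n [1,0])) d \<and>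
     dexter_le d ([1] @ replicate n 1 @ replicate n 0 @ [1,0,0])}"

definition height :: "nat list \<Rightarrow> nat \<Rightarrow> nat" where
  "height d i = count_list (take i d) 1 - count_list (take i d) 0"

definition rho_step :: "nat list \<Rightarrow> nat \<times> nat list \<Rightarrow> nat \<Rightarrow> nat \<times> nat list" where
  "rho_step d st i = (case st of (N2, u) \<Rightarrow>
     if d ! (i - 1) = 0 \<and> d ! i = 1 then (0, u @ [height d i] @ replicate N2 2)
     else if d ! (i - 1) = 1 \<and> d ! i = 1 \<and> i \<noteq> 1 then (N2 + 1, u)
     else (N2, u))"

definition rho :: "nat list \<Rightarrow> nat list" where
  "rho d = snd (foldl (rho_step d) (0, []) [1..<length d])"

definition Tr :: "nat \<Rightarrow> nat list set" where
  "Tr n = {u. length u = n \<and> set u \<subseteq> {0,1,2} \<and> (u \<noteq> [] \<longrightarrow> hd u \<noteq> 2) \<and>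
     (\<forall>i j. i < j \<and> j < n \<and> u ! i = 0 \<longrightarrow> u ! j \<noteq> 1)}"

end

theory Submission
  imports Defs
begin


definition Hh :: "nat list \<Rightarrow> nat \<Rightarrow> int" where
  "Hh w i = int (count_list (take i w) 1) - int (count_list (take i w) 0)"

lemma Hh_append: "Hh (a @ b) i = Hh a i + Hh b (i - length a)"
  by (simp add: Hh_def)

lemma Hh_0[simp]: "Hh w 0 = 0" by (simp add: Hh_def)
lemma Hh_Nil[simp]: "Hh [] i = 0" by (simp add: Hh_def)
lemma Hh_ge_len: "length w \<le> i \<Longrightarrow> Hh w i = Hh w (length w)" by (simp add: Hh_def)

lemma Hh_Cons: "Hh (c # w) (Suc i) = (if c = 1 then 1 else if c = 0 then -1 else 0) + Hh w i"
  by (simp add: Hh_def)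

lemma count_rep[simp]: "count_list (replicate n x) x = n"
  by (induction n) auto
lemma count_rep'[simp]: "y \<noteq> x \<Longrightarrow> count_list (replicate n x) y = 0"
  by (induction n) auto

lemma Hh_rep0[simp]: "Hh (replicate m 0) t = - int (min t m)"
  by (simp add: Hh_def)
lemma Hh_rep1[simp]: "Hh (replicate m (Suc 0)) t = int (min t m)"
  by (simp add: Hh_def)
lemma rep_app[simp]: "replicate m x @ replicate n x = replicate (m+n) x"
  by (simp add: replicate_add)
lemma rep_app2[simp]: "replicate m x @ replicate n x @ ys = replicate (m+n) x @ ys"
  by (metis append_assoc rep_app)

lemma Hh_Suc: "i < length w \<Longrightarrow> Hh w (Suc i) = Hh w i + (if w!i = 1 then 1 else if w!i = 0 then -1 else 0)"
  by (simp add: Hh_def take_Suc_conv_app_nth)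

lemma dyck_iff: "dyck w \<longleftrightarrow> set w \<subseteq> {0,1} \<and> Hh w (length w) = 0 \<and> (\<forall>i\<le>length w. Hh w i \<ge> 0)"
  unfolding dyck_def Hh_def by auto

lemma dyck_append: "dyck a \<Longrightarrow> dyck b \<Longrightarrow> dyck (a @ b)"
  unfolding dyck_iff
proof (intro conjI allI impI)
  assume A: "set a \<subseteq> {0, 1} \<and> Hh a (length a) = 0 \<and> (\<forall>i\<le>length a. 0 \<le> Hh a i)"
     and B: "set b \<subseteq> {0, 1} \<and> Hh b (length b) = 0 \<and> (\<forall>i\<le>length b. 0 \<le> Hh b i)"
  show "set (a @ b) \<subseteq> {0, 1}" using A B by auto
  show "Hh (a @ b) (length (a @ b)) = 0" using A B Hh_ge_len[of a "length a + length b"] by (simp add: Hh_append)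
  fix i assume "i \<le> length (a @ b)"
  show "0 \<le> Hh (a @ b) i"
  proof (cases "i \<le> length a")
    case True then show ?thesis using A by (simp add: Hh_append)
  next
    case False
    then have "Hh a i = 0" using A Hh_ge_len[of a i] by simp
    then show ?thesis using B \<open>i \<le> length (a @ b)\<close> by (simp add: Hh_append)
  qed
qed



definition pyr :: "nat \<Rightarrow> nat list" where "pyr k = replicate k 1 @ replicate k 0"
definition Pi :: "nat list \<Rightarrow> nat list" where "Pi ks = concat (map pyr ks)"
definition W :: "nat list \<Rightarrow> nat list \<Rightarrow> nat list" where "W ks qs = [1] @ Pi ks @ [0] @ Pi qs"
definition pos :: "nat list \<Rightarrow> bool" where "pos xs \<longleftrightarrow> (\<forall>x\<in>set xs. 0 < x)"

lemma Pi_Nil[simp]: "Pi [] = []" by (simp add: Pi_def)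
lemma Pi_Cons[simp]: "Pi (k # ks) = pyr k @ Pi ks" by (simp add: Pi_def)
lemma Pi_append[simp]: "Pi (xs @ ys) = Pi xs @ Pi ys" by (simp add: Pi_def)
lemma pos_simps[simp]: "pos [] " "pos (x # xs) \<longleftrightarrow> 0 < x \<and> pos xs" "pos (xs @ ys) \<longleftrightarrow> pos xs \<and> pos ys"
  by (auto simp: pos_def)
lemma pos_rep[simp]: "pos (replicate n x) \<longleftrightarrow> n = 0 \<or> 0 < x" by (auto simp: pos_def)

lemma Hh_pyr: "Hh (pyr k) i = int (min i k) - int (min (i - k) k)"
  by (simp add: pyr_def Hh_append Hh_rep0 Hh_rep1)

lemma len_pyr[simp]: "length (pyr k) = 2 * k" by (simp add: pyr_def)
lemma set_pyr: "set (pyr k) \<subseteq> {0,1}" by (auto simp: pyr_def)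

lemma dyck_pyr: "dyck (pyr k)"
  unfolding dyck_iff using set_pyr by (auto simp: Hh_pyr)

lemma dyck_Nil: "dyck []" by (simp add: dyck_iff)

lemma dyck_Pi: "dyck (Pi ks)"
  by (induction ks) (auto simp: dyck_Nil dyck_pyr dyck_append)

lemma dyck_wrap: assumes "dyck w" shows "dyck ([1] @ w @ [0])"
proof -
  have A: "set w \<subseteq> {0,1}" "Hh w (length w) = 0" "\<And>i. i \<le> length w \<Longrightarrow> Hh w i \<ge> 0"
    using assms by (auto simp: dyck_iff)
  have "Hh ([1] @ w @ [0]) i \<ge> 0" if "i \<le> Suc (Suc (length w))" for i
  proof (cases "i \<le> Suc (length w)")
    case True
    then show ?thesis using A(3)[of "i - 1"]
      by (cases i) (auto simp: Hh_append Hh_def)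
  next
    case False
    then have "i = Suc (Suc (length w))" using that by simp
    then show ?thesis using A(2) by (simp add: Hh_append Hh_def)
  qed
  moreover have "Hh ([1] @ w @ [0]) (length ([1] @ w @ [0])) = 0"
    using A(2) by (simp add: Hh_append Hh_def)
  ultimately show ?thesis using A(1) by (auto simp: dyck_iff)
qed

lemma dyck_W: "dyck (W ks qs)"
  unfolding W_def using dyck_wrap[OF dyck_Pi[of ks]] dyck_Pi[of qs] dyck_append
  by (metis append_assoc)

lemma primitiveI: assumes "dyck x" "\<And>i. 0 < i \<Longrightarrow> i < length x \<Longrightarrow> Hh x i > 0"
  shows "primitive x"
  unfolding primitive_def
proof (intro conjI assms allI impI)
  fix a b assume H: "x = a @ b \<and> dyck a \<and> dyck b"
  show "a = [] \<or> b = []"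
  proof (rule ccontr)
    assume "\<not> (a = [] \<or> b = [])"
    then have "0 < length a" "length a < length x" using H by auto
    then have "Hh x (length a) > 0" using assms(2) by blast
    moreover have "Hh x (length a) = 0" using H by (simp add: Hh_append dyck_iff)
    ultimately show False by simp
  qed
qed

lemma primitive_pyr: "primitive (pyr k)"
  by (rule primitiveI[OF dyck_pyr]) (auto simp: Hh_pyr)

lemma Pi_hd: "pos qs \<Longrightarrow> Pi qs = [] \<or> hd (Pi qs) = 1"
  by (cases qs) (auto simp: pyr_def)

lemma cover_intro:
  assumes "dyck (p @ [1] @ replicate m 0 @ x @ s)" "primitive x" "0 < m" "s = [] \<or> hd s = 1"
    "\<alpha> + \<beta> = m" "0 < \<beta>"
  shows "dexter_cover (p @ [1] @ replicate m 0 @ x @ s) (p @ [1] @ replicate \<alpha> 0 @ x @ replicate \<beta> 0 @ s)"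
  unfolding dexter_cover_def using assms by blast

lemma M1: assumes "0 < a" "pos qs"
  shows "dexter_cover (W (ks @ [a]) (b # qs)) (W (ks @ [a + b]) qs)"
proof -
  obtain a' where a: "a = Suc a'" using assms by (cases a) auto
  have e1: "W (ks @ [a]) (b # qs) = ([1] @ Pi ks @ replicate a' 1) @ [1] @ replicate (Suc a) 0 @ pyr b @ Pi qs"
    by (simp add: W_def pyr_def a replicate_app_Cons_same)
  have e2: "W (ks @ [a + b]) qs = ([1] @ Pi ks @ replicate a' 1) @ [1] @ replicate 0 0 @ pyr b @ replicate (Suc a) 0 @ Pi qs"
    by (simp add: W_def pyr_def a replicate_app_Cons_same add.commute)
  have d: "dyck (([1] @ Pi ks @ replicate a' 1) @ [1] @ replicate (Suc a) 0 @ pyr b @ Pi qs)"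
    using dyck_W[of "ks @ [a]" "b # qs"] unfolding e1 .
  show ?thesis unfolding e1 e2
    by (rule cover_intro[OF d primitive_pyr]) (use assms Pi_hd[of qs] in auto)
qed



lemma M2: assumes "0 < a" "pos qs"
  shows "dexter_cover (W (ks @ [a]) (b # qs)) (W (ks @ [a, b]) qs)"
proof -
  obtain a' where a: "a = Suc a'" using assms by (cases a) auto
  have e1: "W (ks @ [a]) (b # qs) = ([1] @ Pi ks @ replicate a' 1) @ [1] @ replicate (Suc a) 0 @ pyr b @ Pi qs"
    by (simp add: W_def pyr_def a replicate_app_Cons_same)
  have e2: "W (ks @ [a, b]) qs = ([1] @ Pi ks @ replicate a' 1) @ [1] @ replicate a 0 @ pyr b @ replicate 1 0 @ Pi qs"
    by (simp add: W_def pyr_def a replicate_app_Cons_same)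
  have d: "dyck (([1] @ Pi ks @ replicate a' 1) @ [1] @ replicate (Suc a) 0 @ pyr b @ Pi qs)"
    using dyck_W[of "ks @ [a]" "b # qs"] unfolding e1 .
  show ?thesis unfolding e1 e2
    by (rule cover_intro[OF d primitive_pyr]) (use assms Pi_hd[of qs] in auto)
qed

lemma M3: assumes "0 < a" "pos qs2"
  shows "dexter_cover (W ks (qs1 @ [a, b] @ qs2)) (W ks (qs1 @ [a + b] @ qs2))"
proof -
  obtain a' where a: "a = Suc a'" using assms by (cases a) auto
  have e1: "W ks (qs1 @ [a, b] @ qs2) = ([1] @ Pi ks @ [0] @ Pi qs1 @ replicate a' 1) @ [1] @ replicate a 0 @ pyr b @ Pi qs2"
    by (simp add: W_def pyr_def a replicate_app_Cons_same)
  have e2: "W ks (qs1 @ [a + b] @ qs2) = ([1] @ Pi ks @ [0] @ Pi qs1 @ replicate a' 1) @ [1] @ replicate 0 0 @ pyr b @ replicate a 0 @ Pi qs2"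
    by (simp add: W_def pyr_def a replicate_app_Cons_same add.commute)
  have d: "dyck (([1] @ Pi ks @ [0] @ Pi qs1 @ replicate a' 1) @ [1] @ replicate a 0 @ pyr b @ Pi qs2)"
    using dyck_W[of ks "qs1 @ [a, b] @ qs2"] unfolding e1 .
  show ?thesis unfolding e1 e2
    by (rule cover_intro[OF d primitive_pyr]) (use assms Pi_hd[of qs2] in auto)
qed

lemma M4: assumes "0 < a" "pos cs" "cs \<noteq> []"
  shows "dexter_cover (W (ks1 @ [a, b] @ cs) qs) (W (ks1 @ [a + b] @ cs) qs)"
proof -
  obtain a' where a: "a = Suc a'" using assms by (cases a) auto
  have e1: "W (ks1 @ [a, b] @ cs) qs = ([1] @ Pi ks1 @ replicate a' 1) @ [1] @ replicate a 0 @ pyr b @ (Pi cs @ [0] @ Pi qs)"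
    by (simp add: W_def pyr_def a replicate_app_Cons_same)
  have e2: "W (ks1 @ [a + b] @ cs) qs = ([1] @ Pi ks1 @ replicate a' 1) @ [1] @ replicate 0 0 @ pyr b @ replicate a 0 @ (Pi cs @ [0] @ Pi qs)"
    by (simp add: W_def pyr_def a replicate_app_Cons_same add.commute)
  have d: "dyck (([1] @ Pi ks1 @ replicate a' 1) @ [1] @ replicate a 0 @ pyr b @ (Pi cs @ [0] @ Pi qs))"
    using dyck_W[of "ks1 @ [a, b] @ cs" qs] unfolding e1 .
  have h: "hd (Pi cs @ [0] @ Pi qs) = 1" using assms by (cases cs) (auto simp: pyr_def)
  show ?thesis unfolding e1 e2
    by (rule cover_intro[OF d primitive_pyr]) (use assms h in auto)
qed

abbreviation star :: "nat list \<Rightarrow> nat list \<Rightarrow> bool" where "star \<equiv> dexter_cover\<^sup>*\<^sup>*"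

lemma L1: "0 < a \<Longrightarrow> pos qs \<Longrightarrow> star (W (ks @ [a]) (replicate c 1 @ qs)) (W (ks @ [a + c]) qs)"
proof (induction c arbitrary: a)
  case 0 then show ?case by simp
next
  case (Suc c)
  have "dexter_cover (W (ks @ [a]) (1 # (replicate c 1 @ qs))) (W (ks @ [a + 1]) (replicate c 1 @ qs))"
    by (rule M1) (use Suc.prems in auto)
  moreover have "star (W (ks @ [a + 1]) (replicate c 1 @ qs)) (W (ks @ [a + 1 + c]) qs)"
    by (rule Suc.IH) (use Suc.prems in auto)
  ultimately show ?case by simp
qed

lemma L2: assumes "0 < a" "0 < c" "pos qs"
  shows "star (W (ks @ [a]) (replicate c 1 @ qs)) (W (ks @ [a, c]) qs)"
proof -
  obtain c' where c: "c = Suc c'" using assms by (cases c) auto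
  have "dexter_cover (W (ks @ [a]) (1 # (replicate c' 1 @ qs))) (W (ks @ [a, 1]) (replicate c' 1 @ qs))"
    by (rule M2) (use assms in auto)
  moreover have "star (W ((ks @ [a]) @ [1]) (replicate c' 1 @ qs)) (W ((ks @ [a]) @ [1 + c']) qs)"
    by (rule L1) (use assms in auto)
  ultimately show ?thesis by (simp add: c)
qed

lemma LP: "pos ys \<Longrightarrow> 0 < a \<Longrightarrow> pos R \<Longrightarrow>
  star (W (ks0 @ [a]) (replicate (sum_list ys) 1 @ R)) (W (ks0 @ [a] @ ys) R)"
proof (induction ys arbitrary: ks0 a)
  case Nil then show ?case by simp
next
  case (Cons y ys)
  have "star (W (ks0 @ [a]) (replicate y 1 @ (replicate (sum_list ys) 1 @ R))) (W (ks0 @ [a, y]) (replicate (sum_list ys) 1 @ R))"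
    by (rule L2) (use Cons.prems in auto)
  moreover have "star (W ((ks0 @ [a]) @ [y]) (replicate (sum_list ys) 1 @ R)) (W ((ks0 @ [a]) @ [y] @ ys) R)"
    by (rule Cons.IH) (use Cons.prems in auto)
  ultimately show ?case by simp
qed

lemma LM: "0 < a \<Longrightarrow> pos R \<Longrightarrow> star (W ks (qs1 @ [a] @ replicate c 1 @ R)) (W ks (qs1 @ [a + c] @ R))"
proof (induction c arbitrary: a)
  case 0 then show ?case by simp
next
  case (Suc c)
  have "dexter_cover (W ks (qs1 @ [a, 1] @ (replicate c 1 @ R))) (W ks (qs1 @ [a + 1] @ (replicate c 1 @ R)))"
    by (rule M3) (use Suc.prems in auto)
  moreover have "star (W ks (qs1 @ [a + 1] @ replicate c 1 @ R)) (W ks (qs1 @ [a + 1 + c] @ R))"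
    by (rule Suc.IH) (use Suc.prems in auto)
  ultimately show ?case by simp
qed

lemma LQ: "pos ys \<Longrightarrow> star (W ks (qs1 @ replicate (sum_list ys) 1)) (W ks (qs1 @ ys))"
proof (induction ys arbitrary: qs1)
  case Nil then show ?case by simp
next
  case (Cons y ys)
  obtain y' where y: "y = Suc y'" using Cons.prems by (cases y) auto
  have "star (W ks (qs1 @ [1] @ replicate y' 1 @ replicate (sum_list ys) 1)) (W ks (qs1 @ [1 + y'] @ replicate (sum_list ys) 1))"
    by (rule LM) auto
  moreover have "star (W ks ((qs1 @ [y]) @ replicate (sum_list ys) 1)) (W ks ((qs1 @ [y]) @ ys))"
    by (rule Cons.IH) (use Cons.prems in auto)
  ultimately show ?case by (simp add: y)
qed

lemma D1: "pos ks \<Longrightarrow> ks \<noteq> [] \<Longrightarrow> pos qs \<Longrightarrow> star (W ks qs) (W (ks @ qs) [])"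
proof (induction qs arbitrary: ks)
  case Nil then show ?case by simp
next
  case (Cons q qs)
  obtain ks0 k where ks: "ks = ks0 @ [k]" using Cons.prems by (metis rev_exhaust)
  have "dexter_cover (W (ks0 @ [k]) (q # qs)) (W (ks0 @ [k, q]) qs)"
    by (rule M2) (use Cons.prems ks in auto)
  moreover have "star (W (ks @ [q]) qs) (W ((ks @ [q]) @ qs) [])"
    by (rule Cons.IH) (use Cons.prems in auto)
  ultimately show ?case by (simp add: ks)
qed

lemma D2: "pos (a # rest @ [z]) \<Longrightarrow> star (W (a # rest @ [z]) []) (W [a + sum_list rest, z] [])"
proof (induction rest arbitrary: a)
  case Nil then show ?case by simp
next
  case (Cons b rest)
  have "dexter_cover (W ([] @ [a, b] @ (rest @ [z])) []) (W ([] @ [a + b] @ (rest @ [z])) [])"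
    by (rule M4) (use Cons.prems in auto)
  moreover have "star (W ((a + b) # rest @ [z]) []) (W [a + b + sum_list rest, z] [])"
    by (rule Cons.IH) (use Cons.prems in auto)
  ultimately show ?case by (simp add: add.assoc)
qed

lemma bot_W: "[1,1,0,0] @ concat (replicate n [1,0]) = W [1] (replicate n 1)"
  by (induction n) (auto simp: W_def pyr_def)

lemma top_W: "[1] @ replicate n 1 @ replicate n 0 @ [1,0,0] = W [n, 1] []"
  by (simp add: W_def pyr_def)

lemma chains:
  assumes "pos (k # ks)" "pos qs" "k + sum_list ks + sum_list qs = n + 1" "1 \<le> n"
    and lc: "(qs = [] \<longrightarrow> last (k # ks) = 1) \<and> (qs \<noteq> [] \<longrightarrow> last qs = 1)"
  shows "dexter_le ([1,1,0,0] @ concat (replicate n [1,0])) (W (k # ks) qs)"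
    and "dexter_le (W (k # ks) qs) ([1] @ replicate n 1 @ replicate n 0 @ [1,0,0])"
proof -
  have s1: "star (W ([] @ [1]) (replicate (k - 1) 1 @ replicate (sum_list ks + sum_list qs) 1)) (W ([] @ [1 + (k - 1)]) (replicate (sum_list ks + sum_list qs) 1))"
    by (rule L1) auto
  have s2: "star (W ([] @ [k]) (replicate (sum_list ks) 1 @ replicate (sum_list qs) 1)) (W ([] @ [k] @ ks) (replicate (sum_list qs) 1))"
    by (rule LP) (use assms in auto)
  have s3: "star (W (k # ks) ([] @ replicate (sum_list qs) 1)) (W (k # ks) ([] @ qs))"
    by (rule LQ) (use assms in auto)
  have e: "replicate n 1 = replicate (k - 1) (1::nat) @ replicate (sum_list ks + sum_list qs) 1"
    using assms by simp
  have k: "1 + (k - 1) = k" using assms by simp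
  from s1 s2 s3 have "star (W [1] (replicate n 1)) (W (k # ks) qs)"
    unfolding e k by simp
  then show "dexter_le ([1,1,0,0] @ concat (replicate n [1,0])) (W (k # ks) qs)"
    unfolding dexter_le_def bot_W .
next
  define zs where "zs = (k # ks) @ qs"
  have s1: "star (W (k # ks) qs) (W zs [])" unfolding zs_def by (rule D1) (use assms in auto)
  have "last zs = 1" using lc by (cases "qs = []") (auto simp: zs_def last_append)
  moreover have "zs \<noteq> []" by (simp add: zs_def)
  ultimately obtain ys where ys: "zs = ys @ [1]" by (metis append_butlast_last_id)
  have "ys \<noteq> []"
  proof
    assume "ys = []"
    then have "sum_list zs = 1" using ys by simp
    moreover have "sum_list zs = n + 1" using assms(3) by (simp add: zs_def)
    ultimately show False using assms(4) by simp
  qed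
  then obtain a rest where ar: "ys = a # rest" by (cases ys) auto
  have pz: "pos zs" using assms by (simp add: zs_def)
  have s2: "star (W (a # rest @ [1]) []) (W [a + sum_list rest, 1] [])"
    by (rule D2) (use pz ys ar in auto)
  have "sum_list zs = n + 1" using assms(3) by (simp add: zs_def)
  then have "a + sum_list rest = n" using ys ar by simp
  then show "dexter_le (W (k # ks) qs) ([1] @ replicate n 1 @ replicate n 0 @ [1,0,0])"
    unfolding dexter_le_def top_W using s1 s2 ys ar by simp
qed



fun sstep :: "nat \<times> nat list \<times> nat \<times> nat \<times> nat \<times> bool \<Rightarrow> nat \<Rightarrow> nat \<times> nat list \<times> nat \<times> nat \<times> nat \<times> bool" where
  "sstep (N, u, a, b, p, f) c =
    (if p = 0 \<and> c = 1 then 0 else if p = 1 \<and> c = 1 \<and> \<not> f then Suc N else N,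
     if p = 0 \<and> c = 1 then u @ [a - b] @ replicate N 2 else u,
     if c = 1 then Suc a else a, if c = 0 then Suc b else b, c, False)"

lemma foldl_eq:
  "1 \<le> i \<Longrightarrow> i \<le> length d \<Longrightarrow>
   (case foldl sstep (N, u, count_list (take i d) 1, count_list (take i d) 0, d ! (i - 1), i = 1) (drop i d)
    of (N', u', _) \<Rightarrow> (N', u')) = foldl (rho_step d) (N, u) [i..<length d]"
proof (induction "length d - i" arbitrary: i N u)
  case 0
  then have "i = length d" by simp
  then show ?case by simp
next
  case (Suc x)
  then have i: "i < length d" by simp
  have u: "[i..<length d] = i # [Suc i..<length d]" using i by (simp add: upt_conv_Cons)
  have dr: "drop i d = d ! i # drop (Suc i) d" using i by (simp add: Cons_nth_drop_Suc)
  have t: "take (Suc i) d = take i d @ [d ! i]" using i by (simp add: take_Suc_conv_app_nth)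
  define st where "st = rho_step d (N, u) i"
  have IH: "(case foldl sstep (fst st, snd st, count_list (take (Suc i) d) 1, count_list (take (Suc i) d) 0, d ! (Suc i - 1), Suc i = 1) (drop (Suc i) d)
    of (N', u', _) \<Rightarrow> (N', u')) = foldl (rho_step d) (fst st, snd st) [Suc i..<length d]"
    by (rule Suc.hyps) (use Suc.hyps Suc.prems i in auto)
  have "sstep (N, u, count_list (take i d) 1, count_list (take i d) 0, d ! (i - 1), i = 1) (d ! i)
     = (fst st, snd st, count_list (take (Suc i) d) 1, count_list (take (Suc i) d) 0, d ! (Suc i - 1), Suc i = 1)"
    unfolding st_def rho_step_def height_def t using Suc.prems by auto
  then show ?case using IH unfolding u dr by (simp add: st_def)
qed

lemma rho_Cons1: "rho (1 # rest) = fst (snd (foldl sstep (0, [], 1, 0, 1, True) rest))"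
proof -
  have "(case foldl sstep (0, [], count_list (take 1 (1 # rest)) 1, count_list (take 1 (1 # rest)) 0, (1 # rest) ! (1 - 1), 1 = (1::nat)) (drop 1 (1 # rest))
    of (N', u', _) \<Rightarrow> (N', u')) = foldl (rho_step (1 # rest)) (0, []) [1..<length (1 # rest)]"
    by (rule foldl_eq) auto
  then have E: "(case foldl sstep (0, [], 1, 0, 1, True) rest
    of (N', u', _) \<Rightarrow> (N', u')) = foldl (rho_step (1 # rest)) (0, []) [1..<length (1 # rest)]"
    by simp
  obtain A B C D1 E1 F1 where R: "foldl sstep (0, [], 1, 0, 1, True) rest = (A, B, C, D1, E1, F1)"
    by (metis prod.exhaust)
  show ?thesis unfolding rho_def E[symmetric] R by simp
qed

lemma s_ones: "foldl sstep (N, u, a, b, Suc 0, False) (replicate j (Suc 0)) = (N + j, u, a + j, b, Suc 0, False)"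
  by (induction j arbitrary: N a) auto

lemma s_zeros: "foldl sstep (N, u, a, b, p, f) (replicate (Suc j) 0) = (N, u, a, b + Suc j, 0, False)"
proof (induction j arbitrary: b p f)
  case 0 then show ?case by simp
next
  case (Suc j)
  have "foldl sstep (N, u, a, b, p, f) (replicate (Suc (Suc j)) 0) = foldl sstep (N, u, a, Suc b, 0, False) (replicate (Suc j) 0)"
    by simp
  also have "\<dots> = (N, u, a, Suc b + Suc j, 0, False)" by (rule Suc.IH)
  finally show ?case by simp
qed

lemma s_pyr: "0 < k \<Longrightarrow> foldl sstep (N, u, a, b, 0, False) (pyr k) = (k - 1, u @ [a - b] @ replicate N 2, a + k, b + k, 0, False)"
proof -
  assume k: "0 < k"
  then obtain k' where k': "k = Suc k'" by (cases k) auto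
  have p: "pyr k = [Suc 0] @ replicate k' (Suc 0) @ replicate (Suc k') 0" by (simp add: pyr_def k')
  have "foldl sstep (N, u, a, b, 0, False) (pyr k) =
    foldl sstep (foldl sstep (foldl sstep (N, u, a, b, 0, False) [Suc 0]) (replicate k' (Suc 0))) (replicate (Suc k') 0)"
    unfolding p by (simp only: foldl_append)
  also have "foldl sstep (N, u, a, b, 0, False) [Suc 0] = (0, u @ [a - b] @ replicate N 2, Suc a, b, Suc 0, False)"
    by simp
  finally show ?thesis by (simp only: s_ones s_zeros) (simp add: k')
qed

lemma s_first: "0 < k \<Longrightarrow> foldl sstep (0, [], 1, 0, 1, True) (pyr k) = (k - 1, [], 1 + k, k, 0, False)"
proof -
  assume k: "0 < k"
  then obtain k' where k': "k = Suc k'" by (cases k) auto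
  have p: "pyr k = [Suc 0] @ replicate k' (Suc 0) @ replicate (Suc k') 0" by (simp add: pyr_def k')
  have "foldl sstep (0, [], 1, 0, 1, True) (pyr k) =
    foldl sstep (foldl sstep (foldl sstep (0, [], 1, 0, 1, True) [Suc 0]) (replicate k' (Suc 0))) (replicate (Suc k') 0)"
    unfolding p by (simp only: foldl_append)
  also have "foldl sstep (0, [], 1, 0, 1, True) [Suc 0] = (0, [], 2, 0, Suc 0, False)"
    by simp
  finally show ?thesis by (simp only: s_ones s_zeros) (simp add: k')
qed

fun outP :: "nat \<Rightarrow> nat \<Rightarrow> nat list \<Rightarrow> nat list" where
  "outP h N [] = []"
| "outP h N (k # ks) = h # replicate N 2 @ outP h (k - 1) ks"

fun lastN :: "nat \<Rightarrow> nat list \<Rightarrow> nat" where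
  "lastN N [] = N"
| "lastN N (k # ks) = lastN (k - 1) ks"

lemma s_Pi: "pos ks \<Longrightarrow> foldl sstep (N, u, a, b, 0, False) (Pi ks) = (lastN N ks, u @ outP (a - b) N ks, a + sum_list ks, b + sum_list ks, 0, False)"
proof (induction ks arbitrary: N u a b)
  case Nil then show ?case by simp
next
  case (Cons k ks)
  have "foldl sstep (N, u, a, b, 0, False) (Pi (k # ks)) = foldl sstep (k - 1, u @ [a - b] @ replicate N 2, a + k, b + k, 0, False) (Pi ks)"
    using Cons.prems by (simp add: s_pyr)
  also have "\<dots> = (lastN (k - 1) ks, (u @ [a - b] @ replicate N 2) @ outP (a + k - (b + k)) (k - 1) ks, a + k + sum_list ks, b + k + sum_list ks, 0, False)"
    by (rule Cons.IH) (use Cons.prems in auto)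
  finally show ?case by (simp add: add.assoc)
qed

lemma rho_W: assumes "pos (k # ks)" "pos qs"
  shows "rho (W (k # ks) qs) = outP 1 (k - 1) ks @ outP 0 (lastN (k - 1) ks) qs"
proof -
  have e: "W (k # ks) qs = 1 # (pyr k @ Pi ks @ [0] @ Pi qs)" by (simp add: W_def)
  have k: "0 < k" using assms by simp
  let ?L = "lastN (k - 1) ks"
  have 1: "foldl sstep (0, [], 1, 0, 1, True) (pyr k) = (k - 1, [], 1 + k, k, 0, False)"
    by (rule s_first[OF k])
  have 2: "foldl sstep (k - 1, [], 1 + k, k, 0, False) (Pi ks) = (?L, [] @ outP (1 + k - k) (k - 1) ks, 1 + k + sum_list ks, k + sum_list ks, 0, False)"
    by (rule s_Pi) (use assms in auto)
  have 3: "sstep (?L, [] @ outP (1 + k - k) (k - 1) ks, 1 + k + sum_list ks, k + sum_list ks, 0, False) 0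
     = (?L, outP 1 (k - 1) ks, 1 + k + sum_list ks, Suc (k + sum_list ks), 0, False)" by simp
  have 4: "foldl sstep (?L, outP 1 (k - 1) ks, 1 + k + sum_list ks, Suc (k + sum_list ks), 0, False) (Pi qs)
     = (lastN ?L qs, outP 1 (k - 1) ks @ outP (1 + k + sum_list ks - Suc (k + sum_list ks)) ?L qs, 1 + k + sum_list ks + sum_list qs, Suc (k + sum_list ks) + sum_list qs, 0, False)"
    by (rule s_Pi) (use assms in auto)
  have "foldl sstep (0, [], 1, 0, 1, True) (pyr k @ Pi ks @ [0] @ Pi qs) =
     foldl sstep (sstep (foldl sstep (foldl sstep (0, [], 1, 0, 1, True) (pyr k)) (Pi ks)) 0) (Pi qs)"
    by (simp only: foldl_append foldl_Cons foldl_Nil)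
  also have "\<dots> = (lastN ?L qs, outP 1 (k - 1) ks @ outP (1 + k + sum_list ks - Suc (k + sum_list ks)) ?L qs, 1 + k + sum_list ks + sum_list qs, Suc (k + sum_list ks) + sum_list qs, 0, False)"
    by (simp only: 1 2 3 4)
  finally show ?thesis unfolding e rho_Cons1 by simp
qed

lemma lastN_eq: "lastN N xs = (if xs = [] then N else last xs - 1)"
  by (induction xs arbitrary: N) auto

lemma len_outP: "pos xs \<Longrightarrow> length (outP h N xs) + lastN N xs = N + sum_list xs"
  by (induction xs arbitrary: N) auto

lemma set_outP: "set (outP h N xs) \<subseteq> {h, 2}"
  by (induction xs arbitrary: N) auto

lemma hd_outP: "xs \<noteq> [] \<Longrightarrow> hd (outP h N xs) = h"
  by (cases xs) auto

lemma outP_enc: "outP h N (map Suc xs @ [y]) = concat (map (\<lambda>t. h # replicate t 2) (N # xs))"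
  by (induction xs arbitrary: N) auto



definition lc :: "nat \<Rightarrow> nat list \<Rightarrow> nat list \<Rightarrow> bool" where
  "lc k ks qs \<longleftrightarrow> (qs = [] \<longrightarrow> last (k # ks) = 1) \<and> (qs \<noteq> [] \<longrightarrow> last qs = 1)"

lemma rhoW_len: assumes "pos (k # ks)" "pos qs" "lc k ks qs"
  shows "length (rho (W (k # ks) qs)) + 1 = k + sum_list ks + sum_list qs"
proof -
  let ?L = "lastN (k - 1) ks"
  have 1: "length (outP 1 (k - 1) ks) + ?L = k - 1 + sum_list ks" using assms by (simp add: len_outP)
  have 2: "length (outP 0 ?L qs) + lastN ?L qs = ?L + sum_list qs" using assms by (simp add: len_outP)
  have 3: "lastN ?L qs = 0"
    using assms(3) by (cases "qs = []"; cases "ks = []") (auto simp: lc_def lastN_eq)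
  show ?thesis using 1 2 3 assms(1) by (simp add: rho_W[OF assms(1,2)])
qed

lemma rhoW_Tr: assumes "pos (k # ks)" "pos qs" "lc k ks qs" "k + sum_list ks + sum_list qs = n + 1" "1 \<le> n"
  shows "rho (W (k # ks) qs) \<in> Tr n"
proof -
  define A where "A = outP 1 (k - 1) ks"
  define B where "B = outP 0 (lastN (k - 1) ks) qs"
  have u: "rho (W (k # ks) qs) = A @ B" unfolding A_def B_def by (rule rho_W[OF assms(1,2)])
  have len: "length (A @ B) = n" using rhoW_len[OF assms(1-3)] assms(4) u by simp
  have sA: "set A \<subseteq> {1,2}" unfolding A_def by (rule set_outP)
  have sB: "set B \<subseteq> {0,2}" unfolding B_def by (rule set_outP)
  have hd: "hd (A @ B) \<noteq> 2"
  proof (cases "ks = []")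
    case False
    then have "hd A = 1" "A \<noteq> []" unfolding A_def by (auto simp: hd_outP neq_Nil_conv)
    then show ?thesis by simp
  next
    case True
    then have "A = []" by (simp add: A_def)
    then have "B \<noteq> []" using len assms(5) by auto
    then have "qs \<noteq> []" by (auto simp: B_def)
    then have "hd B = 0" by (simp add: B_def hd_outP)
    then show ?thesis using \<open>A = []\<close> by simp
  qed
  have idx: "(A @ B) ! j \<noteq> 1" if "i < j" "j < n" "(A @ B) ! i = 0" for i j
  proof (cases "j < length A")
    case True
    then have "(A @ B) ! i = A ! i" using that by (simp add: nth_append)
    moreover have "A ! i \<in> set A" using True that by simp
    ultimately show ?thesis using sA that by auto
  next
    case False
    then have "(A @ B) ! j = B ! (j - length A)" by (simp add: nth_append)
    moreover have "B ! (j - length A) \<in> set B" using False that len by simp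
    ultimately show ?thesis using sB by auto
  qed
  show ?thesis unfolding Tr_def u using len sA sB hd idx by auto
qed

definition CC :: "nat \<Rightarrow> nat list \<Rightarrow> nat list" where
  "CC c ts = concat (map (\<lambda>t. c # replicate t 2) ts)"

lemma takeWhile_rep: "\<forall>x\<in>set (takeWhile (\<lambda>x. x = c) xs). x = c \<Longrightarrow>
    takeWhile (\<lambda>x. x = c) xs = replicate (length (takeWhile (\<lambda>x. x = c) xs)) c"
  by (simp add: replicate_length_same)

lemma decomp: "set u \<subseteq> {c, 2} \<Longrightarrow> (u = [] \<or> hd u = c) \<Longrightarrow> \<exists>ts. u = CC c ts"
proof (induction "length u" arbitrary: u rule: less_induct)
  case less
  show ?case
  proof (cases u)
    case Nil then show ?thesis by (intro exI[of _ "[]"]) (simp add: CC_def)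
  next
    case (Cons x rest)
    then have x: "x = c" using less.prems by simp
    define t where "t = length (takeWhile (\<lambda>x. x = 2) rest)"
    define r where "r = dropWhile (\<lambda>x. x = 2) rest"
    have tw: "takeWhile (\<lambda>x. x = 2) rest = replicate t 2"
      unfolding t_def by (metis (mono_tags, lifting) replicate_length_same set_takeWhileD)
    have rest: "rest = replicate t 2 @ r" unfolding r_def by (metis tw takeWhile_dropWhile_id)
    have sr: "set r \<subseteq> {c, 2}" using less.prems Cons rest by auto
    have hr: "r = [] \<or> hd r = c"
    proof (cases r)
      case (Cons y ys)
      then have "y \<noteq> 2" using hd_dropWhile[of "\<lambda>x. x = 2" rest] unfolding r_def by auto
      moreover have "y \<in> {c, 2}" using sr Cons by auto
      ultimately show ?thesis using Cons by auto
    qed simp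
    have "length r < length u" using Cons rest by simp
    then obtain ts where "r = CC c ts" using less.hyps sr hr by blast
    then have "u = CC c (t # ts)" using Cons x rest by (simp add: CC_def)
    then show ?thesis by blast
  qed
qed

lemma Tr_decomp: assumes "u \<in> Tr n" shows "\<exists>as bs. u = CC 1 as @ CC 0 bs"
proof -
  define A where "A = takeWhile (\<lambda>x. x \<noteq> 0) u"
  define B where "B = dropWhile (\<lambda>x. x \<noteq> 0) u"
  have u: "u = A @ B" by (simp add: A_def B_def)
  have su: "set u \<subseteq> {0,1,2}" "u \<noteq> [] \<longrightarrow> hd u \<noteq> 2" "length u = n"
    and ix: "\<And>i j. i < j \<Longrightarrow> j < n \<Longrightarrow> u ! i = 0 \<Longrightarrow> u ! j \<noteq> 1"
    using assms by (auto simp: Tr_def)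
  have sA: "set A \<subseteq> {1, 2}" using su(1) by (auto simp: A_def dest: set_takeWhileD)
  have hA: "A = [] \<or> hd A = 1"
  proof (cases A)
    case (Cons y ys)
    then have "u \<noteq> []" "hd u = y" using u by auto
    moreover have "y \<in> set A" using Cons by simp
    ultimately show ?thesis using su sA Cons by auto
  qed simp
  have hB: "B = [] \<or> hd B = 0"
  proof (cases "B = []")
    case False
    then have "\<not> (hd B \<noteq> 0)" using hd_dropWhile[of "\<lambda>x. x \<noteq> 0" u] unfolding B_def by blast
    then show ?thesis by blast
  qed simp
  have sB: "set B \<subseteq> {0, 2}"
  proof
    fix y assume "y \<in> set B"
    then obtain j where j: "j < length B" "B ! j = y" by (meson in_set_conv_nth)
    have B0: "B ! 0 = 0" using hB j by (cases B) auto
    have uB: "u ! (length A + m) = B ! m" for m using u by (simp add: nth_append)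
    have "y \<in> set u" using \<open>y \<in> set B\<close> u by auto
    moreover have "y \<noteq> 1"
    proof (cases j)
      case 0 then show ?thesis using j B0 by simp
    next
      case (Suc j')
      have "u ! (length A + 0) = 0" using uB[of 0] B0 by simp
      moreover have "length A + j < n" using j u su(3) by (metis add_less_cancel_left length_append)
      ultimately have "u ! (length A + j) \<noteq> 1" using ix[of "length A + 0" "length A + j"] Suc by simp
      then show ?thesis using uB j by simp
    qed
    ultimately show "y \<in> {0, 2}" using su(1) by auto
  qed
  obtain as where "A = CC 1 as" using decomp[OF sA hA] by blast
  moreover obtain bs where "B = CC 0 bs" using decomp[OF sB hB] by blast
  ultimately show ?thesis using u by blast
qed

lemma CC_Nil[simp]: "CC c [] = []" by (simp add: CC_def)
lemma CC_Cons_ne: "CC c (t # ts) \<noteq> []" by (simp add: CC_def)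

lemma outP_CC: "outP h N (map Suc xs @ [y]) = CC h (N # xs)"
  unfolding CC_def by (rule outP_enc)

lemma surj_W: assumes "u \<in> Tr n" "1 \<le> n"
  shows "\<exists>k ks qs. pos (k # ks) \<and> pos qs \<and> lc k ks qs \<and> rho (W (k # ks) qs) = u"
proof -
  obtain as bs where u: "u = CC 1 as @ CC 0 bs" using Tr_decomp[OF assms(1)] by blast
  have un: "u \<noteq> []" using assms by (auto simp: Tr_def)
  show ?thesis
  proof (cases as)
    case Nil
    then obtain b bs' where bs: "bs = b # bs'" using u un by (cases bs) auto
    have "rho (W (Suc b # []) (map Suc bs' @ [1])) = u"
      using rho_W[of "Suc b" "[]" "map Suc bs' @ [1]"]
      by (simp add: outP_CC[where xs = bs' and y = 1, simplified] u Nil bs pos_def)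
    moreover have "pos (Suc b # [])" "pos (map Suc bs' @ [1])" "lc (Suc b) [] (map Suc bs' @ [1])"
      by (auto simp: pos_def lc_def)
    ultimately show ?thesis by blast
  next
    case (Cons a1 as')
    show ?thesis
    proof (cases bs)
      case Nil
      have "rho (W (Suc a1 # (map Suc as' @ [1])) []) = u"
        using rho_W[of "Suc a1" "map Suc as' @ [1]" "[]"]
        by (simp add: outP_CC[where xs = as' and y = 1, simplified] u Nil Cons pos_def)
      moreover have "pos (Suc a1 # (map Suc as' @ [1]))" "lc (Suc a1) (map Suc as' @ [1]) []" "pos []"
        by (auto simp: pos_def lc_def)
      ultimately show ?thesis by blast
    next
      case (Cons b bs')
      have "rho (W (Suc a1 # (map Suc as' @ [Suc b])) (map Suc bs' @ [1])) = u"
        using rho_W[of "Suc a1" "map Suc as' @ [Suc b]" "map Suc bs' @ [1]"]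
        by (simp add: outP_CC[where xs = as' and y = "Suc b", simplified]
            outP_CC[where xs = bs' and y = 1, simplified] lastN_eq u Cons \<open>as = a1 # as'\<close> pos_def)
      moreover have "pos (Suc a1 # (map Suc as' @ [Suc b]))" "pos (map Suc bs' @ [1])" "lc (Suc a1) (map Suc as' @ [Suc b]) (map Suc bs' @ [1])"
        by (auto simp: pos_def lc_def)
      ultimately show ?thesis by blast
    qed
  qed
qed



definition valley :: "nat list \<Rightarrow> nat \<Rightarrow> bool" where
  "valley w j \<longleftrightarrow> 0 < j \<and> j < length w \<and> w ! (j - 1) = 0 \<and> w ! j = 1"

definition QQ :: "nat list \<Rightarrow> bool" where
  "QQ w \<longleftrightarrow> (\<forall>j. valley w j \<longrightarrow> Hh w j \<le> 1 \<and> (\<forall>k. 0 < k \<and> k \<le> j \<longrightarrow> Hh w j \<le> Hh w k))"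

lemma Hh_take: "Hh (take t x) i = Hh x (min i t)"
  by (simp add: Hh_def min.commute)

lemma Hh_drop: "t \<le> length x \<Longrightarrow> Hh (drop t x) i = Hh x (t + i) - Hh x t"
proof -
  assume t: "t \<le> length x"
  have "Hh x (t + i) = Hh (take t x) (t + i) + Hh (drop t x) (t + i - length (take t x))"
    using Hh_append[of "take t x" "drop t x" "t + i"] by simp
  also have "t + i - length (take t x) = i" using t by simp
  also have "Hh (take t x) (t + i) = Hh x t" by (simp add: Hh_take)
  finally show ?thesis by simp
qed

lemma dyck_split: assumes "dyck x" "t \<le> length x" "Hh x t = 0"
  shows "dyck (take t x)" "dyck (drop t x)"
proof -
  have A: "set x \<subseteq> {0,1}" "Hh x (length x) = 0" "\<And>i. i \<le> length x \<Longrightarrow> Hh x i \<ge> 0"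
    using assms(1) by (auto simp: dyck_iff)
  show "dyck (take t x)" unfolding dyck_iff using A assms(2,3)
    by (auto simp: Hh_take dest: in_set_takeD)
  show "dyck (drop t x)" unfolding dyck_iff using A assms(2,3)
    by (auto simp: Hh_drop dest: in_set_dropD)
qed

lemma prim_pos: assumes "primitive x" "0 < t" "t < length x" shows "Hh x t \<ge> 1"
proof (rule ccontr)
  assume "\<not> Hh x t \<ge> 1"
  moreover have "dyck x" using assms(1) by (simp add: primitive_def)
  moreover then have "Hh x t \<ge> 0" using assms(3) by (simp add: dyck_iff)
  ultimately have h: "Hh x t = 0" by simp
  have "dyck (take t x)" "dyck (drop t x)" using dyck_split[OF \<open>dyck x\<close> _ h] assms(3) by auto
  moreover have "take t x \<noteq> []" "drop t x \<noteq> []" using assms by auto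
  ultimately show False using assms(1) unfolding primitive_def by (metis append_take_drop_id)
qed

lemma Hh_LMR: "Hh (L @ M @ R) k = Hh L k + Hh M (k - length L) + Hh R (k - length L - length M)"
  by (simp add: Hh_append)



lemma QQ_back:
  assumes dy: "dyck (p @ [1] @ replicate m 0 @ x @ R)"
    and px: "primitive x" "x \<noteq> []" and m: "m = \<alpha> + \<beta>" "0 < \<beta>"
    and R: "R = [] \<or> hd R = 1"
    and Q': "QQ (p @ [1] @ replicate \<alpha> 0 @ x @ replicate \<beta> 0 @ R)"
  shows "QQ (p @ [1] @ replicate m 0 @ x @ R)"
proof -
  define L where "L = p @ [1]"
  define M where "M = replicate m 0 @ x"
  define M' where "M' = replicate \<alpha> 0 @ x @ replicate \<beta> 0"
  define d where "d = L @ M @ R"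
  define d' where "d' = L @ M' @ R"
  have dd: "p @ [1] @ replicate m 0 @ x @ R = d" by (simp add: d_def L_def M_def)
  have dd': "p @ [1] @ replicate \<alpha> 0 @ x @ replicate \<beta> 0 @ R = d'" by (simp add: d'_def L_def M'_def)
  define l where "l = length L"
  define E where "E = l + length M"
  have l1: "1 \<le> l" by (simp add: l_def L_def)
  have lenM: "length M = m + length x" by (simp add: M_def)
  have lM: "length M' = length M" by (simp add: M_def M'_def m)
  have len: "length d' = length d" by (simp add: d_def d'_def lM)
  have lenE: "length d = E + length R" by (simp add: d_def E_def l_def)
  have dyx: "dyck x" using px by (simp add: primitive_def)
  have hx0: "Hh x (length x) = 0" and hxn: "\<And>t. t \<le> length x \<Longrightarrow> Hh x t \<ge> 0"
    using dyx by (auto simp: dyck_iff)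
  have hxp: "\<And>t. 0 < t \<Longrightarrow> t < length x \<Longrightarrow> Hh x t \<ge> 1" using prim_pos[OF px(1)] by blast
  have dyd: "dyck d" using dy dd by simp
  have dn: "\<And>k. k \<le> length d \<Longrightarrow> Hh d k \<ge> 0" using dyd by (simp add: dyck_iff)
  have d0: "Hh d (length d) = 0" using dyd by (simp add: dyck_iff)
  define c where "c = Hh L l"
  have HM: "Hh M t = (if t \<le> m then - int t else - int m + Hh x (t - m))" for t
    by (simp add: M_def Hh_append)
  have HM': "Hh M' t = (if t \<le> \<alpha> then - int t else - int \<alpha> + Hh x (t - \<alpha>) - int (min (t - \<alpha> - length x) \<beta>))" for t
    by (simp add: M'_def Hh_append)
  have hx0': "\<And>i. length x \<le> i \<Longrightarrow> Hh x i = 0" using hx0 Hh_ge_len by metis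
  have HMend: "Hh M (length M) = - int m" "Hh M' (length M) = - int m"
    unfolding M_def M'_def using hx0' by (simp_all add: Hh_append m)
  have Hd: "Hh d k = Hh L k + Hh M (k - l) + Hh R (k - E)" for k
    by (simp add: d_def Hh_LMR l_def E_def)
  have Hd': "Hh d' k = Hh L k + Hh M' (k - l) + Hh R (k - E)" for k
    by (simp add: d'_def Hh_LMR l_def E_def lM)
  have HL: "k \<le> l \<Longrightarrow> Hh d k = Hh d' k" for k
    by (simp add: Hd Hd' E_def)
  have HLc: "l \<le> k \<Longrightarrow> Hh L k = c" for k
    using Hh_ge_len[of L k] by (simp add: c_def l_def)
  have HR: "E \<le> k \<Longrightarrow> Hh d k = Hh d' k" for k
  proof -
    assume k: "E \<le> k"
    then have "Hh M (k - l) = Hh M (length M)" "Hh M' (k - l) = Hh M' (length M')"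
      using Hh_ge_len[of M "k - l"] Hh_ge_len[of M' "k - l"] by (auto simp: E_def lM)
    then show ?thesis using HMend lM by (simp add: Hd Hd')
  qed
  have HMid: "l \<le> k \<Longrightarrow> k \<le> E \<Longrightarrow> Hh d k = c + Hh M (k - l)" for k
    by (simp add: Hd HLc E_def)
  have HMid': "l \<le> k \<Longrightarrow> k \<le> E \<Longrightarrow> Hh d' k = c + Hh M' (k - l)" for k
    by (simp add: Hd' HLc E_def)
  have HdE: "Hh d E = c - int m" using HMid[of E] HMend by (simp add: E_def)
  have lower: "l \<le> k \<Longrightarrow> k \<le> E \<Longrightarrow> Hh d k \<ge> c - int m" for k
  proof -
    assume a: "l \<le> k" "k \<le> E"
    have "Hh M (k - l) \<ge> - int m"
    proof (cases "k - l \<le> m")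
      case True then show ?thesis by (simp add: HM)
    next
      case False
      then have "k - l - m \<le> length x" using a by (simp add: E_def M_def)
      then show ?thesis using False hxn by (simp add: HM)
    qed
    then show ?thesis using HMid[OF a] by simp
  qed
  have cm: "c - int m \<ge> 0" using dn[of E] HdE lenE by simp
  have Ld: "i < l \<Longrightarrow> d ! i = d' ! i" for i by (simp add: d_def d'_def nth_append l_def)
  have Rd: "E \<le> i \<Longrightarrow> d ! i = d' ! i" for i by (auto simp: d_def d'_def nth_append l_def E_def lM)
  have Md: "l \<le> i \<Longrightarrow> i < E \<Longrightarrow> d ! i = M ! (i - l)" for i by (auto simp: d_def nth_append l_def E_def)
  have Md': "l \<le> i \<Longrightarrow> i < E \<Longrightarrow> d' ! i = M' ! (i - l)" for i by (auto simp: d'_def nth_append l_def E_def lM)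
  have Q'v: "\<And>j. valley d' j \<Longrightarrow> Hh d' j \<le> 1 \<and> (\<forall>k. 0 < k \<and> k \<le> j \<longrightarrow> Hh d' j \<le> Hh d' k)"
    using Q' dd' by (simp add: QQ_def)
  have vE: "R \<noteq> [] \<Longrightarrow> valley d' E"
  proof -
    assume "R \<noteq> []"
    then have "hd R = 1" using R by simp
    then have "d' ! E = 1" using \<open>R \<noteq> []\<close> by (simp add: d'_def nth_append l_def E_def lM hd_conv_nth)
    moreover have "d' ! (E - 1) = 0"
    proof -
      have e: "E - 1 = l + (\<alpha> + length x + (\<beta> - 1))" using m by (simp add: E_def M_def)
      have "d' ! (E - 1) = M' ! (\<alpha> + length x + (\<beta> - 1))"
        using Md'[of "E - 1"] m unfolding e by (simp add: E_def M_def add.assoc)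
      also have "\<dots> = 0" using m by (cases \<beta>) (auto simp: M'_def nth_append nth_Cons')
      finally show ?thesis .
    qed
    ultimately show ?thesis using \<open>R \<noteq> []\<close> l1 len lenE by (simp add: valley_def E_def)
  qed
  have main: "Hh d j \<le> 1 \<and> (\<forall>k. 0 < k \<and> k \<le> j \<longrightarrow> Hh d j \<le> Hh d k)" if vj: "valley d j" for j
  proof -
    from vj have j0: "0 < j" and jl: "j < length d" and a0: "d ! (j - 1) = 0" and a1: "d ! j = 1"
      by (auto simp: valley_def)
    consider "j < l" | "l \<le> j" "j < l + m" | "j = l + m" | "l + m < j" "j < E" | "j = E" | "E < j"
      by linarith
    then show ?thesis
    proof cases
      case 1
      then have "valley d' j" using vj Ld[of j] Ld[of "j - 1"] len by (auto simp: valley_def)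
      then show ?thesis using Q'v[of j] HL 1 by auto
    next
      case 2
      then have "d ! j = 0" using Md[of j] by (auto simp: E_def M_def nth_append)
      then show ?thesis using a1 by simp
    next
      case 3
      have hj: "Hh d j = c - int m" using HMid[of j] 3 HM[of m] by (simp add: E_def lenM)
      show ?thesis
      proof (cases "R = []")
        case True
        then have "E = length d" using lenE by simp
        then have "c - int m = 0" using HdE d0 by simp
        then show ?thesis using hj dn jl by auto
      next
        case False
        have QE: "Hh d' E \<le> 1 \<and> (\<forall>k. 0 < k \<and> k \<le> E \<longrightarrow> Hh d' E \<le> Hh d' k)" using Q'v vE False by blast
        have "Hh d' E = c - int m" using HR[of E] HdE by simp
        moreover have "Hh d k \<ge> c - int m" if "0 < k" "k \<le> j" for k
        proof (cases "k \<le> l")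
          case True then show ?thesis using QE HL[of k] that 3 \<open>Hh d' E = c - int m\<close> by (auto simp: E_def)
        next
          case False then show ?thesis using lower[of k] that 3 by (simp add: E_def M_def)
        qed
        ultimately show ?thesis using hj QE by auto
      qed
    next
      case 4
      define t where "t = j - l - m"
      have t: "0 < t" "t < length x" using 4 by (auto simp: t_def E_def M_def)
      have "d ! j = M ! (j - l)" using Md[of j] 4 by simp
      also have "\<dots> = x ! t" using 4 by (auto simp: M_def nth_append t_def)
      finally have e1: "d ! j = x ! t" .
      have "d ! (j - 1) = M ! (j - 1 - l)" using Md[of "j - 1"] 4 by simp
      also have "\<dots> = x ! (t - 1)" using 4 t by (auto simp: M_def nth_append t_def)
      finally have e2: "d ! (j - 1) = x ! (t - 1)" .
      have xt: "x ! (t - 1) = 0" "x ! t = 1" using e1 e2 a0 a1 by auto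
      define j' where "j' = l + \<alpha> + t"
      have j'E: "j' < E" using t m by (simp add: j'_def E_def M_def)
      have "d' ! j' = 1" "d' ! (j' - 1) = 0"
        using Md'[of j'] Md'[of "j' - 1"] j'E xt t by (auto simp: j'_def M'_def nth_append)
      then have "valley d' j'" using j'E len lenE t by (simp add: valley_def j'_def)
      then have "Hh d' j' \<le> 1" using Q'v by blast
      moreover have "Hh d' j' = c - int \<alpha> + Hh x t" using HMid'[of j'] j'E t
        by (simp add: j'_def HM')
      moreover have "Hh x t \<ge> 1" using hxp t by blast
      ultimately show ?thesis using cm m by simp
    next
      case 5
      then have RnE: "R \<noteq> []" using jl lenE by auto
      have QE: "Hh d' E \<le> 1 \<and> (\<forall>k. 0 < k \<and> k \<le> E \<longrightarrow> Hh d' E \<le> Hh d' k)" using Q'v vE RnE by blast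
      have hE: "Hh d' E = c - int m" using HR[of E] HdE by simp
      have "Hh d k \<ge> c - int m" if "0 < k" "k \<le> j" for k
      proof (cases "k \<le> l")
        case True then show ?thesis using QE HL[of k] that 5 hE l1 by (auto simp: E_def)
      next
        case False then show ?thesis using lower[of k] that 5 by simp
      qed
      then show ?thesis using QE hE HdE 5 by auto
    next
      case 6
      then have "valley d' j" using vj Rd[of j] Rd[of "j - 1"] len by (auto simp: valley_def)
      then have Qj: "Hh d' j \<le> 1 \<and> (\<forall>k. 0 < k \<and> k \<le> j \<longrightarrow> Hh d' j \<le> Hh d' k)" using Q'v by blast
      have hj: "Hh d j = Hh d' j" using HR[of j] 6 by simp
      have "Hh d j \<le> Hh d k" if "0 < k" "k \<le> j" for k
      proof -
        consider "k \<le> l" | "l < k" "k < E" | "E \<le> k" by linarith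
        then show ?thesis
        proof cases
          case 1 then show ?thesis using HL[of k] Qj hj that by auto
        next
          case 2
          have "Hh d' j \<le> Hh d' E" using Qj 6 l1 by (auto simp: E_def)
          then show ?thesis using lower[of k] 2 hj HR[of E] HdE by simp
        next
          case 3 then show ?thesis using HR[of k] Qj hj that by auto
        qed
      qed
      then show ?thesis using Qj hj by auto
    qed
  qed
  show ?thesis unfolding dd QQ_def using main by blast
qed



definition LA :: "nat list \<Rightarrow> bool" where
  "LA w \<longleftrightarrow> (\<exists>a j. w = a @ [1] @ replicate j 0 \<and> a \<noteq> [] \<and> last a = 0)"

lemma rep0_uniq: "replicate j 0 @ Suc 0 # X = replicate k 0 @ Suc 0 # Y \<Longrightarrow> j = k \<and> X = Y"
proof (induction j arbitrary: k)
  case 0 then show ?case by (cases k) auto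
next
  case (Suc j) then show ?case by (cases k) auto
qed

lemma LA_uniq: fixes a b :: "nat list"
  assumes "a @ [1] @ replicate j 0 = b @ [1] @ replicate k 0" shows "a = b" "j = k"
proof -
  have "rev (a @ [1] @ replicate j 0) = rev (b @ [1] @ replicate k 0)" using assms by simp
  then have "replicate j 0 @ Suc 0 # rev a = replicate k 0 @ Suc 0 # rev b" by simp
  then have "j = k \<and> rev a = rev b" by (rule rep0_uniq)
  then show "a = b" "j = k" by auto
qed

lemma last1: "set x \<subseteq> {0,1} \<Longrightarrow> 1 \<in> set x \<Longrightarrow> \<exists>x0 j. x = x0 @ [1] @ replicate j 0"
proof (induction x rule: rev_induct)
  case Nil then show ?case by simp
next
  case (snoc c xs)
  show ?case
  proof (cases "c = 1")
    case True then show ?thesis by (intro exI[of _ xs] exI[of _ 0]) simp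
  next
    case False
    then have c: "c = 0" using snoc.prems by auto
    then have "1 \<in> set xs" using snoc.prems False by auto
    then obtain x0 j where "xs = x0 @ [1] @ replicate j 0" using snoc by auto
    then have "xs @ [c] = x0 @ [1] @ replicate (Suc j) 0" using c by (simp add: replicate_append_same[symmetric])
    then show ?thesis by blast
  qed
qed

lemma dyck_hd: assumes "dyck x" "x \<noteq> []" shows "x ! 0 = 1"
proof -
  have "1 \<le> length x" using assms by (cases x) auto
  then have "Hh x 1 \<ge> 0" "set x \<subseteq> {0,1}" using assms by (auto simp: dyck_iff)
  moreover have "Hh x 1 = Hh x 0 + (if x ! 0 = 1 then 1 else if x ! 0 = 0 then -1 else 0)"
    using Hh_Suc[of 0 x] assms by simp
  moreover have "x ! 0 \<in> set x" using assms by simp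
  ultimately show ?thesis by (auto split: if_splits)
qed

lemma dyck_last: assumes "dyck x" "x \<noteq> []" shows "last x = 0"
proof -
  obtain i where i: "length x = Suc i" using assms by (cases "length x") auto
  have "Hh x i \<ge> 0" "Hh x (Suc i) = 0" "set x \<subseteq> {0,1}" using assms i by (auto simp: dyck_iff)
  moreover have "Hh x (Suc i) = Hh x i + (if x ! i = 1 then 1 else if x ! i = 0 then -1 else 0)"
    using Hh_Suc[of i x] i by simp
  moreover have "x ! i \<in> set x" using i by simp
  ultimately have "x ! i = 0" by (auto split: if_splits)
  then show ?thesis using i assms by (simp add: last_conv_nth)
qed

lemma dyck_has1: "dyck x \<Longrightarrow> x \<noteq> [] \<Longrightarrow> 1 \<in> set x"
  using dyck_hd by (metis length_greater_0_conv nth_mem)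

lemma LA_back:
  assumes dy: "dyck (p @ [1] @ replicate m 0 @ x @ s)" and x: "dyck x" "x \<noteq> []" and m: "m = \<alpha> + \<beta>" "0 < m"
    and s: "s = [] \<or> hd s = 1"
    and LA': "LA (p @ [1] @ replicate \<alpha> 0 @ x @ replicate \<beta> 0 @ s)"
  shows "LA (p @ [1] @ replicate m 0 @ x @ s)"
proof -
  obtain a k where ak: "p @ [1] @ replicate \<alpha> 0 @ x @ replicate \<beta> 0 @ s = a @ [1] @ replicate k 0" "a \<noteq> []" "last a = 0"
    using LA' by (auto simp: LA_def)
  have sd: "set s \<subseteq> {0,1}" "set x \<subseteq> {0,1}" using dy by (auto simp: dyck_iff)
  have lx: "last x = 0" using dyck_last[OF x] .
  show ?thesis
  proof (cases "s = []")
    case False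
    then have "1 \<in> set s" using s by (cases s) auto
    then obtain s0 j where s0: "s = s0 @ [1] @ replicate j 0" using last1 sd by blast
    have "(p @ [1] @ replicate \<alpha> 0 @ x @ replicate \<beta> 0 @ s0) @ [1] @ replicate j 0 = a @ [1] @ replicate k 0"
      using ak s0 by simp
    then have a: "a = p @ [1] @ replicate \<alpha> 0 @ x @ replicate \<beta> 0 @ s0" using LA_uniq by metis
    have "p @ [1] @ replicate m 0 @ x @ s = (p @ [1] @ replicate m 0 @ x @ s0) @ [1] @ replicate j 0"
      using s0 by simp
    moreover have "last (p @ [1] @ replicate m 0 @ x @ s0) = 0"
      using lx ak(3) x(2) a by (cases "s0 = []") auto
    ultimately show ?thesis unfolding LA_def by blast
  next
    case True
    obtain x0 j where x0: "x = x0 @ [1] @ replicate j 0" using last1 sd dyck_has1[OF x] by blast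
    have "(p @ [1] @ replicate \<alpha> 0 @ x0) @ [1] @ replicate (j + \<beta>) 0 = a @ [1] @ replicate k 0"
      using ak x0 True by simp
    then have a: "a = p @ [1] @ replicate \<alpha> 0 @ x0" using LA_uniq by metis
    have "p @ [1] @ replicate m 0 @ x @ s = (p @ [1] @ replicate m 0 @ x0) @ [1] @ replicate j 0"
      using x0 True by simp
    moreover have "last (p @ [1] @ replicate m 0 @ x0) = 0"
      using ak(3) a m by (cases "x0 = []") auto
    ultimately show ?thesis unfolding LA_def by blast
  qed
qed

lemma cover_E:
  assumes "dexter_cover d d'"
  obtains p x s m \<alpha> \<beta> where "dyck d" "primitive x" "m > 0" "s = [] \<or> hd s = 1"
    "d = p @ [1] @ replicate m 0 @ x @ s" "\<alpha> + \<beta> = m" "\<beta> > 0"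
    "d' = p @ [1] @ replicate \<alpha> 0 @ x @ replicate \<beta> 0 @ s"
  using assms unfolding dexter_cover_def apply (elim conjE exE)
  apply (rule that) by assumption+

lemma cover_back: assumes "dexter_cover d d'" "QQ d' \<and> LA d'" shows "QQ d \<and> LA d"
proof -
  obtain p x s m \<alpha> \<beta> where H0: "dyck d" and H: "primitive x" "m > 0" "s = [] \<or> hd s = 1"
    "d = p @ [1] @ replicate m 0 @ x @ s" "\<alpha> + \<beta> = m" "\<beta> > 0"
    "d' = p @ [1] @ replicate \<alpha> 0 @ x @ replicate \<beta> 0 @ s"
    using assms(1) by (rule cover_E)
  show ?thesis
  proof (cases "x = []")
    case True
    then have "d = d'" using H by (simp add: replicate_add[symmetric])
    then show ?thesis using assms(2) by simp
  next
    case False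
    have "QQ d" unfolding H(4)
      by (rule QQ_back) (use H H0 False assms(2) in auto)
    moreover have "LA d" unfolding H(4)
      by (rule LA_back) (use H H0 False assms(2) in \<open>auto simp: primitive_def\<close>)
    ultimately show ?thesis by blast
  qed
qed

lemma cover_fwd: assumes "dexter_cover d d'" "take 2 d = [1,1]" shows "take 2 d' = [1,1]"
proof -
  obtain p x s m \<alpha> \<beta> where H: "m > 0"
    "d = p @ [1] @ replicate m 0 @ x @ s"
    "d' = p @ [1] @ replicate \<alpha> 0 @ x @ replicate \<beta> 0 @ s"
    using assms(1) by (rule cover_E)
  obtain m' where m': "m = Suc m'" using H by (cases m) auto
  show ?thesis
  proof (cases p)
    case Nil then show ?thesis using assms(2) H m' by simp
  next
    case (Cons a p')
    then show ?thesis using assms(2) H by (cases p') auto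
  qed
qed

lemma le_back: "dexter_le a b \<Longrightarrow> QQ b \<and> LA b \<Longrightarrow> QQ a \<and> LA a"
  unfolding dexter_le_def
proof (induction rule: converse_rtranclp_induct)
  case base then show ?case by simp
next
  case (step y z) then show ?case using cover_back by blast
qed

lemma le_fwd: "dexter_le a b \<Longrightarrow> take 2 a = [1,1] \<Longrightarrow> take 2 b = [1,1]"
  unfolding dexter_le_def
proof (induction rule: rtranclp_induct)
  case base then show ?case by simp
next
  case (step y z) then show ?case using cover_fwd by blast
qed



lemma Hh_one: "Hh [Suc 0] k = (if k = 0 then 0 else 1)" by (cases k) (auto simp: Hh_def)
lemma Hh_zero: "Hh [0] k = (if k = 0 then 0 else -1)" by (cases k) (auto simp: Hh_def)

lemma first_return: assumes "dyck w" "w \<noteq> []"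
  shows "\<exists>r. 0 < r \<and> r \<le> length w \<and> Hh w r = 0 \<and> (\<forall>i. 0 < i \<and> i < r \<longrightarrow> Hh w i \<ge> 1)"
proof -
  let ?P = "\<lambda>i. 0 < i \<and> i \<le> length w \<and> Hh w i = 0"
  have "?P (length w)" using assms by (simp add: dyck_iff)
  then obtain r where r: "?P r" "\<forall>m<r. \<not> ?P m" using exists_least_iff[of ?P] by blast
  have "Hh w i \<ge> 1" if "0 < i" "i < r" for i
  proof -
    have "Hh w i \<ge> 0" using assms that r by (simp add: dyck_iff)
    moreover have "Hh w i \<noteq> 0" using r that by auto
    ultimately show ?thesis by simp
  qed
  then show ?thesis using r by blast
qed

lemma NV: assumes "dyck w" "\<forall>j. \<not> valley w j" shows "\<exists>a. w = pyr a"
proof -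
  define T where "T = takeWhile (\<lambda>x. x = 1) w"
  define D where "D = dropWhile (\<lambda>x. x = 1) w"
  define T2 where "T2 = takeWhile (\<lambda>x. x = 0) D"
  define D2 where "D2 = dropWhile (\<lambda>x. x = 0) D"
  have sw: "set w \<subseteq> {0,1}" using assms by (simp add: dyck_iff)
  have T: "T = replicate (length T) 1" unfolding T_def by (metis (mono_tags, lifting) replicate_length_same set_takeWhileD)
  have T2: "T2 = replicate (length T2) 0" unfolding T2_def by (metis (mono_tags, lifting) replicate_length_same set_takeWhileD)
  have w: "w = T @ T2 @ D2" by (simp add: T_def D_def T2_def D2_def)
  have "D2 = []"
  proof (rule ccontr)
    assume ne: "D2 \<noteq> []"
    have "hd D2 \<noteq> 0" using ne hd_dropWhile[of "\<lambda>x. x = 0" D] unfolding D2_def by blast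
    moreover have "hd D2 \<in> set w" using ne w by auto
    ultimately have h1: "hd D2 = 1" using sw by auto
    have "T2 \<noteq> []"
    proof
      assume "T2 = []"
      then have "D = D2" by (simp add: D2_def T2_def D_def) (metis append_Nil takeWhile_dropWhile_id)
      moreover have "hd D \<noteq> 1" using ne \<open>D = D2\<close> hd_dropWhile[of "\<lambda>x. x = 1" w] unfolding D_def by blast
      ultimately show False using h1 by simp
    qed
    define j where "j = length T + length T2"
    have "w ! j = 1" using w h1 ne by (simp add: j_def nth_append hd_conv_nth)
    moreover have "w ! (j - 1) = 0"
    proof -
      obtain t where t: "length T2 = Suc t" using \<open>T2 \<noteq> []\<close> by (cases T2) auto
      have "j - 1 = length T + t" by (simp add: j_def t)
      moreover have "w ! (length T + t) = T2 ! t" using w t by (simp add: nth_append)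
      moreover have "T2 ! t = 0" using T2 t by (metis lessI nth_replicate)
      ultimately show ?thesis by simp
    qed
    moreover have "0 < j" "j < length w" using \<open>T2 \<noteq> []\<close> ne w by (auto simp: j_def)
    ultimately have "valley w j" by (simp add: valley_def)
    then show False using assms by blast
  qed
  then have w2: "w = replicate (length T) 1 @ replicate (length T2) 0" using w T T2 by simp
  have "Hh w (length w) = 0" using assms by (simp add: dyck_iff)
  then have "length T = length T2" using w2 by (simp add: Hh_append)
  then show ?thesis using w2 by (auto simp: pyr_def)
qed

lemma PY: "dyck w \<Longrightarrow> (\<forall>j. valley w j \<longrightarrow> Hh w j = 0) \<Longrightarrow> \<exists>ks. pos ks \<and> w = Pi ks"
proof (induction "length w" arbitrary: w rule: less_induct)
  case less
  show ?case
  proof (cases "w = []")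
    case True then show ?thesis by (intro exI[of _ "[]"]) simp
  next
    case False
    obtain r where r: "0 < r" "r \<le> length w" "Hh w r = 0" "\<forall>i. 0 < i \<and> i < r \<longrightarrow> Hh w i \<ge> 1"
      using first_return[OF less.prems(1) False] by blast
    have d1: "dyck (take r w)" and d2: "dyck (drop r w)" using dyck_split[OF less.prems(1) r(2,3)] by auto
    have "\<forall>j. \<not> valley (take r w) j"
    proof (intro allI notI)
      fix j assume v: "valley (take r w) j"
      then have "j < r" "0 < j" by (auto simp: valley_def)
      then have "valley w j" using v by (auto simp: valley_def)
      then have "Hh w j = 0" using less.prems(2) by blast
      then show False using r(4) \<open>j < r\<close> \<open>0 < j\<close> by fastforce
    qed
    then obtain a where a: "take r w = pyr a" using NV[OF d1] by blast
    have a0: "0 < a" using a r by (metis len_pyr length_take min_absorb2 mult_0_right neq0_conv less_not_refl2)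
    have "\<forall>j. valley (drop r w) j \<longrightarrow> Hh (drop r w) j = 0"
    proof (intro allI impI)
      fix j assume v: "valley (drop r w) j"
      then have "valley w (r + j)" using r(2) by (auto simp: valley_def add.commute)
      then have "Hh w (r + j) = 0" using less.prems(2) by blast
      then show "Hh (drop r w) j = 0" using r(2,3) by (simp add: Hh_drop)
    qed
    moreover have "length (drop r w) < length w" using r by simp
    ultimately obtain qs where qs: "pos qs" "drop r w = Pi qs" using less.hyps d2 by blast
    have "w = Pi (a # qs)" using a qs by (metis Pi_Cons append_take_drop_id)
    then show ?thesis using a0 qs by (intro exI[of _ "a # qs"]) auto
  qed
qed

lemma unwrap: assumes "dyck w" "w \<noteq> []" "\<forall>i. 0 < i \<and> i < length w \<longrightarrow> Hh w i \<ge> 1"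
  shows "\<exists>A. w = [1] @ A @ [0] \<and> dyck A"
proof -
  have h: "w ! 0 = 1" and l: "last w = 0" using dyck_hd dyck_last assms by auto
  have "length w \<noteq> 1" using h l by (metis One_nat_def last_conv_nth length_0_conv assms(2) diff_Suc_1 zero_neq_one)
  then have lw: "2 \<le> length w" using assms(2) by (cases w) (auto simp: Suc_le_eq)
  define A where "A = butlast (tl w)"
  have tl: "tl w \<noteq> []" using lw by (cases w) auto
  have w: "w = [1] @ A @ [0]"
  proof -
    have "w = hd w # tl w" using assms(2) by simp
    also have "tl w = A @ [last (tl w)]" using tl by (simp add: A_def)
    also have "last (tl w) = last w" using tl assms(2) by (metis last_ConsR list.collapse)
    finally show ?thesis using h l assms(2) by (simp add: hd_conv_nth)
  qed
  have sw: "set w \<subseteq> {0,1}" using assms by (simp add: dyck_iff)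
  have HA: "Hh w (Suc i) = 1 + Hh A i + Hh [0] (i - length A)" for i
    using Hh_append[of "[1]" "A @ [0]" "Suc i"] Hh_append[of A "[0]" i] w by (simp add: Hh_one)
  have "Hh A i \<ge> 0" if "i \<le> length A" for i
  proof -
    have e: "Hh w (Suc i) = 1 + Hh A i" using HA[of i] that by (simp add: Hh_zero)
    have "Suc i < length w" using that w by simp
    then have "Hh w (Suc i) \<ge> 1" using assms(3) by blast
    then show ?thesis using e by simp
  qed
  moreover have "Hh A (length A) = 0"
  proof -
    have "Hh w (length w) = 0" using assms by (simp add: dyck_iff)
    then show ?thesis using HA[of "Suc (length A)"] w by (simp add: Hh_zero Hh_ge_len[of A "Suc (length A)"])
  qed
  moreover have "set A \<subseteq> {0,1}" using sw w by auto
  ultimately show ?thesis using w by (auto simp: dyck_iff)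
qed



lemma len_Pi: "length (Pi ks) = 2 * sum_list ks"
  by (induction ks) auto

lemma struct_thm:
  assumes dy: "dyck d" and Q: "QQ d" and t2: "take 2 d = [1,1]" and la: "LA d"
  shows "\<exists>k ks qs. d = W (k # ks) qs \<and> pos (k # ks) \<and> pos qs \<and> lc k ks qs"
proof -
  have dne: "d \<noteq> []" using t2 by auto
  obtain r where r: "0 < r" "r \<le> length d" "Hh d r = 0" "\<forall>i. 0 < i \<and> i < r \<longrightarrow> Hh d i \<ge> 1"
    using first_return[OF dy dne] by blast
  have d1: "dyck (take r d)" and d2: "dyck (drop r d)" using dyck_split[OF dy r(2,3)] by auto
  have "take r d \<noteq> []" using r dne by simp
  moreover have "\<forall>i. 0 < i \<and> i < length (take r d) \<longrightarrow> Hh (take r d) i \<ge> 1"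
    using r by (auto simp: Hh_take)
  ultimately obtain A where A: "take r d = [1] @ A @ [0]" "dyck A" using unwrap[OF d1] by blast
  define B where "B = drop r d"
  have d: "d = [1] @ A @ [0] @ B" using A(1) unfolding B_def by (metis append_assoc append_take_drop_id)
  have QQd: "\<And>j. valley d j \<Longrightarrow> Hh d j \<le> 1 \<and> (\<forall>k. 0 < k \<and> k \<le> j \<longrightarrow> Hh d j \<le> Hh d k)"
    using Q by (simp add: QQ_def)
  have HdA: "Hh d (Suc j) = 1 + Hh A j" if "j \<le> length A" for j
  proof -
    have "Hh d (Suc j) = Hh [1] (Suc j) + (Hh A j + (Hh [0] (j - length A) + Hh B (j - length A - 1)))"
      unfolding d Hh_append by simp
    also have "j - length A = 0" using that by simp
    finally show ?thesis by (simp add: Hh_one)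
  qed
  have "\<forall>j. valley A j \<longrightarrow> Hh A j = 0"
  proof (intro allI impI)
    fix j assume v: "valley A j"
    then have "valley d (Suc j)" using d by (auto simp: valley_def nth_append)
    then have "Hh d (Suc j) \<le> 1" using QQd by blast
    moreover have "Hh A j \<ge> 0" using A(2) v by (simp add: dyck_iff valley_def)
    ultimately show "Hh A j = 0" using HdA[of j] v by (simp add: valley_def)
  qed
  then obtain ks where ks: "pos ks" "A = Pi ks" using PY[OF A(2)] by blast
  have "length (take r d) = r" using r(2) by simp
  then have lr: "r = length A + 2" using A(1) by simp
  have "\<forall>j. valley B j \<longrightarrow> Hh B j = 0"
  proof (intro allI impI)
    fix j assume v: "valley B j"
    then have "valley d (r + j)" using d lr by (auto simp: valley_def nth_append)
    then have "Hh d (r + j) \<le> Hh d r" using QQd r(1) by auto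
    moreover have "Hh B j = Hh d (r + j)" using r(2,3) by (simp add: B_def Hh_drop)
    moreover have "Hh B j \<ge> 0" using d2 v by (simp add: B_def dyck_iff valley_def)
    ultimately show "Hh B j = 0" using r(3) by simp
  qed
  then obtain qs where qs: "pos qs" "B = Pi qs" using PY d2 unfolding B_def by blast
  have dW: "d = W ks qs" using d ks qs by (simp add: W_def)
  have "ks \<noteq> []"
  proof
    assume "ks = []"
    then have "take 2 d = [1, 0]" using dW by (simp add: W_def)
    then show False using t2 by simp
  qed
  then obtain k ks' where kk: "ks = k # ks'" by (cases ks) auto
  obtain a j where aj: "d = a @ [1] @ replicate j 0" "a \<noteq> []" "last a = 0" using la by (auto simp: LA_def)
  have lc: "lc k ks' qs"
  proof (cases "qs = []")
    case False
    then obtain qs0 q where q: "qs = qs0 @ [q]" by (metis rev_exhaust)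
    then obtain q' where q': "q = Suc q'" using qs by (cases q) auto
    have "d = ([1] @ Pi ks @ [0] @ Pi qs0 @ replicate q' 1) @ [1] @ replicate q 0"
      using dW q q' by (simp add: W_def pyr_def replicate_app_Cons_same)
    then have "a = [1] @ Pi ks @ [0] @ Pi qs0 @ replicate q' 1" using aj LA_uniq by metis
    then have "q' = 0" using aj(3) by (cases q') (auto simp: last_append split: if_splits)
    then show ?thesis using False q q' by (simp add: lc_def)
  next
    case True
    obtain ks0 q where q: "ks = ks0 @ [q]" using \<open>ks \<noteq> []\<close> by (metis rev_exhaust)
    then obtain q' where q': "q = Suc q'" using ks by (cases q) auto
    have "d = ([1] @ Pi ks0 @ replicate q' 1) @ [1] @ replicate (Suc q) 0"
      using dW q q' True by (simp add: W_def pyr_def replicate_app_Cons_same)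
    then have "a = [1] @ Pi ks0 @ replicate q' 1" using aj LA_uniq by metis
    then have "q' = 0" using aj(3) by (cases q') (auto simp: last_append split: if_splits)
    moreover have "last (k # ks') = q" using kk q by (metis last_snoc)
    ultimately show ?thesis using True q' by (simp add: lc_def)
  qed
  show ?thesis using dW kk ks qs lc by blast
qed

lemma LA_top: "1 \<le> n \<Longrightarrow> LA ([1] @ replicate n 1 @ replicate n 0 @ [1,0,0])"
  unfolding LA_def
  by (rule exI[of _ "[1] @ replicate n 1 @ replicate n 0"], rule exI[of _ 2]) (cases n, auto simp: numeral_2_eq_2)

lemma QQ_top: assumes n: "1 \<le> n" shows "QQ ([1] @ replicate n 1 @ replicate n 0 @ [1,0,0])"
proof -
  define T where "T = [1] @ replicate n (1::nat) @ replicate n 0 @ [1,0,0]"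
  have nt: "T ! i = (if i \<le> n then 1 else if i \<le> 2 * n then 0 else if i = 2 * n + 1 then 1 else 0)"
    if "i < 2 * n + 4" for i
  proof -
    consider "i = 0" | "0 < i" "i \<le> n" | "n < i" "i \<le> 2 * n" | "i = 2 * n + 1" | "2 * n + 1 < i" by linarith
    then show ?thesis
    proof cases
      case 1 then show ?thesis by (simp add: T_def)
    next
      case 2 then show ?thesis by (cases i) (auto simp: T_def nth_append)
    next
      case 3 then show ?thesis by (cases i) (auto simp: T_def nth_append)
    next
      case 4 then show ?thesis by (simp add: T_def nth_append)
    next
      case 5
      then have "i - 1 - n - n = 1 \<or> i - 1 - n - n = 2" using that by linarith
      then show ?thesis using 5 by (cases i) (auto simp: T_def nth_append)
    qed
  qed
  have lT: "length T = 2 * n + 4" by (simp add: T_def)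
  have HT: "Hh T k = 1 + int (min (k - 1) n) - int (min (k - 1 - n) n)" if "1 \<le> k" "k \<le> 2 * n + 1" for k
  proof -
    have "Hh T k = Hh [1] k + Hh (replicate n 1) (k - 1) + Hh (replicate n 0) (k - 1 - n) + Hh [1,0,0] (k - 1 - n - n)"
      unfolding T_def Hh_append by (simp add: add.assoc)
    moreover have "k - 1 - n - n = 0" using that by simp
    ultimately show ?thesis using that by (simp add: Hh_one)
  qed
  have "Hh T j \<le> 1 \<and> (\<forall>k. 0 < k \<and> k \<le> j \<longrightarrow> Hh T j \<le> Hh T k)" if v: "valley T j" for j
  proof -
    have j: "0 < j" "j < 2 * n + 4" "T ! (j - 1) = 0" "T ! j = 1" using v lT by (auto simp: valley_def)
    have "j = 2 * n + 1"
    proof (rule ccontr)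
      assume "j \<noteq> 2 * n + 1"
      have "(if j \<le> n then 1 else if j \<le> 2 * n then 0 else if j = 2 * n + 1 then 1 else 0) = (1::nat)"
        using j(4) nt[OF j(2)] by metis
      then have jn: "j \<le> n" using \<open>j \<noteq> 2 * n + 1\<close> by (simp split: if_splits)
      have "j - 1 < 2 * n + 4" using j(2) by simp
      from nt[OF this] have "T ! (j - 1) = 1" using jn by simp
      then show False using j(3) by simp
    qed
    then have "Hh T j = 1" using HT[of j] by simp
    moreover have "Hh T k \<ge> 1" if "0 < k" "k \<le> j" for k
      using HT[of k] that \<open>j = 2 * n + 1\<close> by (simp, arith)
    ultimately show ?thesis by auto
  qed
  then show ?thesis unfolding QQ_def T_def by blast
qed

theorem lemma1p2:
  fixes n :: nat
  assumes "n \<ge> 1"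
  shows "rho ` F n = Tr n"
proof
  show "rho ` F n \<subseteq> Tr n"
  proof
    fix u assume "u \<in> rho ` F n"
    then obtain d where d: "d \<in> F n" "u = rho d" by blast
    have dy: "dyck d" and ld: "length d = 2 * (n + 2)"
      and lb: "dexter_le ([1,1,0,0] @ concat (replicate n [1,0])) d"
      and lt: "dexter_le d ([1] @ replicate n 1 @ replicate n 0 @ [1,0,0])"
      using d(1) by (auto simp: F_def)
    have "take 2 d = [1,1]" using le_fwd[OF lb] by simp
    moreover have "QQ d \<and> LA d" using le_back[OF lt] QQ_top LA_top assms by blast
    ultimately obtain k ks qs where s: "d = W (k # ks) qs" "pos (k # ks)" "pos qs" "lc k ks qs"
      using struct_thm dy by blast
    have "length d = 2 + 2 * (k + sum_list ks + sum_list qs)" using s(1) by (simp add: W_def len_Pi)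
    then have "k + sum_list ks + sum_list qs = n + 1" using ld by simp
    then show "u \<in> Tr n" using rhoW_Tr[OF s(2-4)] assms d(2) s(1) by simp
  qed
next
  show "Tr n \<subseteq> rho ` F n"
  proof
    fix u assume u: "u \<in> Tr n"
    obtain k ks qs where s: "pos (k # ks)" "pos qs" "lc k ks qs" "rho (W (k # ks) qs) = u"
      using surj_W[OF u assms] by blast
    have "length u = n" using u by (simp add: Tr_def)
    then have sum: "k + sum_list ks + sum_list qs = n + 1" using rhoW_len[OF s(1-3)] s(4) by simp
    have dW: "dyck (W (k # ks) qs)" by (rule dyck_W)
    have lW: "length (W (k # ks) qs) = 2 * (n + 2)" using sum by (simp add: W_def len_Pi)
    have "W (k # ks) qs \<in> F n"
      unfolding F_def using chains[OF s(1,2) sum assms s(3)[unfolded lc_def]] dW lW by blast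
    then show "u \<in> rho ` F n" using s(4) by blast
  qed
qed


end
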